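(* Let $X\subseteq U$ with $|X|=m$ be partitioned (deterministically) into $k$ groups $X_1,\dots,X_k$, and suppose there is $m_0\ge1$ with $|X_i|\le m_0$ for all $i$. Let $h:U\to[n]$ be a simple tabulation hash function. Let $C_i$ be the number of unordered pairs $\{x,y\}\subseteq X_i$ with $x\ne y$ and $h(x)=h(y)$, and $C=\sum_{i=1}^k C_i$. Then $$\mathbb{E}[C]\le\frac{m\,m_0}{2n}\qquad\text{and}\qquad \mathrm{Var}[C]\le\frac{(3^c+1)m^2}{n}+\frac{m\,m_0^2}{n^2}.$$ Moreover, for any query key $q\in U\setminus X$ and any bin $z\in[n]$, $\mathbb{E}[C\mid h(q)=z]\le\frac{m\,m_0}{2n}$.
   Context: Simple tabulation hashing: the key universe is $U=[u]$, each key $x\in U$ is viewed as a vector $(x[0],\dots,x[c-1])$ of $c=O(1)$ characters from $\Sigma=[u^{1/c}]$; the range is $[n]=[2^r]$. $h(x)=h_0(x[0])\oplus\cdots\oplus h_{c-1}(x[c-1])$ with $h_0,\dots,h_{c-1}:\Sigma\to[2^r]$ independent fully random functions and $\oplus$ bitwise XOR. *)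

theory Defs
  imports "HOL-Probability.Probability"
begin

text \<open>Keys are vectors of c characters from the alphabet [s] = {0..<s},
  represented as lists of length c.  The range is [2^r].\<close>

definition keys :: "nat \<Rightarrow> nat \<Rightarrow> nat list set" where
  "keys c s = {xs. length xs = c \<and> set xs \<subseteq> {..<s}}"

text \<open>A simple tabulation hash function is given by c tables T 0, ..., T (c-1),
  each a function from [s] to [2^r]; the probability space is the uniform
  distribution over all such table families (independent fully random functions).\<close>

definition tables :: "nat \<Rightarrow> nat \<Rightarrow> nat \<Rightarrow> (nat \<Rightarrow> nat \<Rightarrow> nat) set" where
  "tables c s r = PiE {..<c} (\<lambda>_. PiE {..<s} (\<lambda>_. {..<2^r}))"

definition tab_hash :: "nat \<Rightarrow> (nat \<Rightarrow> nat \<Rightarrow> nat) \<Rightarrow> nat list \<Rightarrow> nat" where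
  "tab_hash c T x = foldr (\<lambda>i acc. xor (T i (x ! i)) acc) [0..<c] 0"

definition tab_space :: "nat \<Rightarrow> nat \<Rightarrow> nat \<Rightarrow> (nat \<Rightarrow> nat \<Rightarrow> nat) pmf" where
  "tab_space c s r = pmf_of_set (tables c s r)"

definition coll_pairs :: "nat \<Rightarrow> (nat \<Rightarrow> nat \<Rightarrow> nat) \<Rightarrow> nat list set \<Rightarrow> nat" where
  "coll_pairs c T A = card {{x, y} | x y. x \<in> A \<and> y \<in> A \<and> x \<noteq> y \<and> tab_hash c T x = tab_hash c T y}"

definition total_coll :: "nat \<Rightarrow> (nat \<Rightarrow> nat \<Rightarrow> nat) \<Rightarrow> nat \<Rightarrow> (nat \<Rightarrow> nat list set) \<Rightarrow> nat" where
  "total_coll c T k G = (\<Sum>i<k. coll_pairs c T (G i))"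

end

theory Submission
  imports Defs
begin
lemma xor_lt: "(a::nat) < 2^r \<Longrightarrow> b < 2^r \<Longrightarrow> xor a b < 2^r"
proof -
  assume "a < 2^r" "b < 2^r"
  hence "take_bit r a = a" "take_bit r b = b" by (simp_all add: take_bit_nat_eq_self_iff)
  hence "take_bit r (xor a b) = xor a b" by simp
  thus ?thesis by (metis take_bit_nat_eq_self_iff)
qed

lemma xor_cancel: "xor (xor (a::nat) d) d = a"
  by (simp add: xor.assoc)

lemma xor_eq0_iff: "xor (a::nat) b = 0 \<longleftrightarrow> a = b"
  by (metis xor.comm_neutral xor_cancel xor_self_eq)

lemma uniform_count:
  fixes F :: "'a \<Rightarrow> nat" and \<sigma> :: "nat \<Rightarrow> 'a \<Rightarrow> 'a"
  assumes fin: "finite A" and Flt: "\<And>a. a \<in> A \<Longrightarrow> F a < 2^r"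
    and smap: "\<And>d a. d < 2^r \<Longrightarrow> a \<in> A \<Longrightarrow> \<sigma> d a \<in> A"
    and sinv: "\<And>d a. d < 2^r \<Longrightarrow> a \<in> A \<Longrightarrow> \<sigma> d (\<sigma> d a) = a"
    and sF: "\<And>d a. d < 2^r \<Longrightarrow> a \<in> A \<Longrightarrow> F (\<sigma> d a) = xor (F a) d"
    and v: "v < 2^r"
  shows "card {a\<in>A. F a = v} * 2^r = card A"
proof -
  have le: "card {a\<in>A. F a = w} \<le> card {a\<in>A. F a = u}" if "w < 2^r" "u < 2^r" for w u
  proof -
    let ?d = "xor w u"
    have d: "?d < 2^r" using that xor_lt by blast
    have "inj_on (\<sigma> ?d) {a\<in>A. F a = w}"
      by (rule inj_onI) (metis (no_types, lifting) d mem_Collect_eq sinv)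
    moreover have "\<sigma> ?d ` {a\<in>A. F a = w} \<subseteq> {a\<in>A. F a = u}"
      using d smap sF by (auto simp flip: xor.assoc)
    ultimately show ?thesis using fin by (intro card_inj_on_le) auto
  qed
  have eq: "card {a\<in>A. F a = w} = card {a\<in>A. F a = v}" if "w < 2^r" for w
    using le[OF that v] le[OF v that] by simp
  have U: "A = (\<Union>w\<in>{..<2^r}. {a\<in>A. F a = w})" using Flt by auto
  have "card (\<Union>w\<in>{..<(2::nat)^r}. {a\<in>A. F a = w}) = (\<Sum>w\<in>{..<2^r}. card {a\<in>A. F a = w})"
    using fin by (intro card_UN_disjoint) auto
  hence "card A = (\<Sum>w\<in>{..<2^r}. card {a\<in>A. F a = w})" using U by simp
  also have "\<dots> = (\<Sum>w\<in>{..<(2::nat)^r}. card {a\<in>A. F a = v})" using eq by simp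
  finally show ?thesis by simp
qed

definition sh :: "nat \<Rightarrow> nat \<Rightarrow> nat \<Rightarrow> (nat \<Rightarrow> nat \<Rightarrow> nat) \<Rightarrow> (nat \<Rightarrow> nat \<Rightarrow> nat)" where
  "sh i a d T = T(i := (T i)(a := xor (T i a) d))"

lemma sh_inv: "sh i a d (sh i a d T) = T"
  by (rule ext, rule ext) (simp add: sh_def xor_cancel)

lemma sh_tables:
  assumes "T \<in> tables c s r" "i < c" "a < s" "d < 2^r"
  shows "sh i a d T \<in> tables c s r"
proof -
  have "T i a < 2^r" using assms unfolding tables_def by (auto simp: PiE_iff)
  hence "xor (T i a) d < 2^r" using assms(4) xor_lt by blast
  thus ?thesis using assms unfolding tables_def sh_def by (auto simp: PiE_iff extensional_def)
qed

lemma foldr_sh: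
  assumes "distinct L"
  shows "foldr (\<lambda>j acc. xor (sh i a d T j (x ! j)) acc) L 0 =
         xor (foldr (\<lambda>j acc. xor (T j (x ! j)) acc) L 0) (if i \<in> set L \<and> x ! i = a then d else 0)"
  using assms
proof (induction L)
  case Nil
  then show ?case by simp
next
  case (Cons j L)
  show ?case
  proof (cases "j = i \<and> x ! i = a")
    case True
    then show ?thesis using Cons by (simp add: sh_def xor.assoc xor.left_commute xor.commute)
  next
    case False
    then show ?thesis using Cons by (auto simp: sh_def xor.assoc xor.left_commute xor.commute)
  qed
qed

lemma hash_sh: "tab_hash c (sh i a d T) x = xor (tab_hash c T x) (if i < c \<and> x ! i = a then d else 0)"
  unfolding tab_hash_def by (subst foldr_sh) auto

lemma foldr_lt:
  assumes "T \<in> tables c s r" "x \<in> keys c s" "set L \<subseteq> {..<c}"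
  shows "foldr (\<lambda>j acc. xor (T j (x ! j)) acc) L 0 < 2^r"
  using assms(3)
proof (induction L)
  case Nil
  then show ?case by simp
next
  case (Cons j L)
  have "j < c" using Cons by auto
  hence "x ! j < s" using assms(2) unfolding keys_def by (auto intro!: subsetD[of "set x"] nth_mem)
  hence "T j (x ! j) < 2^r" using assms(1) \<open>j < c\<close> unfolding tables_def by (auto simp: PiE_iff)
  then show ?case using Cons xor_lt by auto
qed

lemma hash_lt: "T \<in> tables c s r \<Longrightarrow> x \<in> keys c s \<Longrightarrow> tab_hash c T x < 2^r"
  unfolding tab_hash_def by (rule foldr_lt) auto

lemma tables_finite: "finite (tables c s r)"
  unfolding tables_def by (auto intro!: finite_PiE)

lemma tables_card_pos: "card (tables c s r) > 0"
  unfolding tables_def by (simp add: card_PiE)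

lemma tables_ne: "tables c s r \<noteq> {}"
  using tables_card_pos by (metis card.empty less_irrefl)

lemma keys_diff:
  assumes "x \<in> keys c s" "y \<in> keys c s" "x \<noteq> y"
  obtains i where "i < c" "x ! i \<noteq> y ! i"
  using assms unfolding keys_def by (metis (mono_tags, lifting) mem_Collect_eq nth_equalityI)

lemma keys_char: "x \<in> keys c s \<Longrightarrow> i < c \<Longrightarrow> x ! i < s"
  unfolding keys_def by (auto intro!: subsetD[of "set x"] nth_mem)

lemma xor_inj: "xor (a::nat) e = xor b e \<longleftrightarrow> a = b"
  by (metis xor_cancel)

lemma sh_pres_eq:
  assumes "(x ! i = a) = (y ! i = a)"
  shows "tab_hash c (sh i a d T) x = tab_hash c (sh i a d T) y \<longleftrightarrow> tab_hash c T x = tab_hash c T y"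
  using assms by (simp add: hash_sh xor_inj)

lemma card_coll_gen:
  assumes B: "B \<subseteq> tables c s r" and Bp: "\<And>d T. d < 2^r \<Longrightarrow> T \<in> B \<Longrightarrow> sh i a d T \<in> B"
    and x: "x \<in> keys c s" and y: "y \<in> keys c s" and i: "i < c"
    and xy: "(x ! i = a) \<noteq> (y ! i = a)"
  shows "card {T\<in>B. tab_hash c T x = tab_hash c T y} * 2^r = card B"
proof -
  let ?F = "\<lambda>T. xor (tab_hash c T x) (tab_hash c T y)"
  have fin: "finite B" using B tables_finite finite_subset by blast
  have "card {T\<in>B. ?F T = 0} * 2^r = card B"
  proof (rule uniform_count[where \<sigma> = "\<lambda>d. sh i a d"])
    show "finite B" by fact
    show "?F T < 2^r" if "T \<in> B" for T using that B hash_lt x y xor_lt by blast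
    show "sh i a d T \<in> B" if "d < 2^r" "T \<in> B" for d T using that Bp by blast
    show "sh i a d (sh i a d T) = T" for d T by (rule sh_inv)
    show "?F (sh i a d T) = xor (?F T) d" for d T
      using xy i by (cases "x ! i = a") (auto simp: hash_sh xor.assoc xor.left_commute xor.commute)
  qed simp
  moreover have "{T\<in>B. ?F T = 0} = {T\<in>B. tab_hash c T x = tab_hash c T y}"
    by (simp add: xor_eq0_iff)
  ultimately show ?thesis by simp
qed

lemma card_A:
  assumes "x \<in> keys c s" "y \<in> keys c s" "x \<noteq> y"
  shows "card {T\<in>tables c s r. tab_hash c T x = tab_hash c T y} * 2^r = card (tables c s r)"
proof -
  obtain i where i: "i < c" "x ! i \<noteq> y ! i" using keys_diff assms by blast
  show ?thesis
    by (rule card_coll_gen[where i = i and a = "x ! i"])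
       (use assms i keys_char sh_tables in auto)
qed

lemma card_single:
  assumes "q \<in> keys c s" "c \<ge> 1" "z < 2^r"
  shows "card {T\<in>tables c s r. tab_hash c T q = z} * 2^r = card (tables c s r)"
proof (rule uniform_count[where \<sigma> = "\<lambda>d. sh 0 (q ! 0) d"])
  have q0: "q ! 0 < s" using assms keys_char by auto
  show "finite (tables c s r)" by (rule tables_finite)
  show "tab_hash c T q < 2^r" if "T \<in> tables c s r" for T using that assms hash_lt by blast
  show "sh 0 (q ! 0) d T \<in> tables c s r" if "d < 2^r" "T \<in> tables c s r" for d T
    using that q0 assms sh_tables by auto
  show "sh 0 (q ! 0) d (sh 0 (q ! 0) d T) = T" for d T by (rule sh_inv)
  show "tab_hash c (sh 0 (q ! 0) d T) q = xor (tab_hash c T q) d" for d T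
    using assms by (simp add: hash_sh)
qed (use assms in auto)

definition dep :: "nat \<Rightarrow> nat list \<Rightarrow> nat list \<Rightarrow> nat list \<Rightarrow> nat list \<Rightarrow> bool" where
  "dep c x y x' y' = (\<forall>i<c. \<forall>a. ((x ! i = a) \<noteq> (y ! i = a)) = ((x' ! i = a) \<noteq> (y' ! i = a)))"

lemma card_AB:
  assumes x: "x \<in> keys c s" and y: "y \<in> keys c s" and x': "x' \<in> keys c s" and y': "y' \<in> keys c s"
    and xy: "x \<noteq> y" and xy': "x' \<noteq> y'" and nd: "\<not> dep c x y x' y'"
  shows "card {T\<in>tables c s r. tab_hash c T x = tab_hash c T y \<and> tab_hash c T x' = tab_hash c T y'} * 2^r * 2^r
         = card (tables c s r)"
proof -
  obtain i a where i: "i < c" and ne: "((x ! i = a) \<noteq> (y ! i = a)) \<noteq> ((x' ! i = a) \<noteq> (y' ! i = a))"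
    using nd unfolding dep_def by blast
  show ?thesis
  proof (cases "(x ! i = a) \<noteq> (y ! i = a)")
    case True
    let ?B = "{T\<in>tables c s r. tab_hash c T x' = tab_hash c T y'}"
    have a: "a < s" using True x y i keys_char by metis
    have "card {T\<in>?B. tab_hash c T x = tab_hash c T y} * 2^r = card ?B"
      by (rule card_coll_gen[where i = i and a = a])
         (use True ne i a x y sh_tables sh_pres_eq[of x' i a y'] in auto)
    moreover have "card ?B * 2^r = card (tables c s r)" using card_A x' y' xy' by blast
    moreover have "{T\<in>?B. tab_hash c T x = tab_hash c T y} =
       {T\<in>tables c s r. tab_hash c T x = tab_hash c T y \<and> tab_hash c T x' = tab_hash c T y'}" by auto
    ultimately show ?thesis by metis
  next
    case False
    let ?B = "{T\<in>tables c s r. tab_hash c T x = tab_hash c T y}"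
    have T2: "(x' ! i = a) \<noteq> (y' ! i = a)" using False ne by blast
    have a: "a < s" using T2 x' y' i keys_char by metis
    have "card {T\<in>?B. tab_hash c T x' = tab_hash c T y'} * 2^r = card ?B"
      by (rule card_coll_gen[where i = i and a = a])
         (use False T2 i a x' y' sh_tables sh_pres_eq[of x i a y] in auto)
    moreover have "card ?B * 2^r = card (tables c s r)" using card_A x y xy by blast
    moreover have "{T\<in>?B. tab_hash c T x' = tab_hash c T y'} =
       {T\<in>tables c s r. tab_hash c T x = tab_hash c T y \<and> tab_hash c T x' = tab_hash c T y'}" by auto
    ultimately show ?thesis by metis
  qed
qed

lemma card_q:
  assumes q: "q \<in> keys c s" and c: "c \<ge> 1" and z: "z < 2^r"
    and x: "x \<in> keys c s" and y: "y \<in> keys c s" and xy: "x \<noteq> y"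
  shows "card {T\<in>tables c s r. tab_hash c T q = z \<and> tab_hash c T x = tab_hash c T y} * 2^r * 2^r
         = card (tables c s r)"
proof -
  obtain i where i: "i < c" "x ! i \<noteq> y ! i" using keys_diff x y xy by blast
  define a where "a = (if q ! i \<noteq> x ! i then x ! i else y ! i)"
  have qa: "q ! i \<noteq> a" using i unfolding a_def by auto
  have a: "a < s" unfolding a_def using i x y keys_char by auto
  have xya: "(x ! i = a) \<noteq> (y ! i = a)" using i unfolding a_def by auto
  let ?B = "{T\<in>tables c s r. tab_hash c T q = z}"
  have "card {T\<in>?B. tab_hash c T x = tab_hash c T y} * 2^r = card ?B"
    by (rule card_coll_gen[where i = i and a = a])
       (use xya i a x y sh_tables qa in \<open>auto simp: hash_sh\<close>)
  moreover have "card ?B * 2^r = card (tables c s r)" using card_single q c z by blast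
  moreover have "{T\<in>?B. tab_hash c T x = tab_hash c T y} =
       {T\<in>tables c s r. tab_hash c T q = z \<and> tab_hash c T x = tab_hash c T y}" by auto
  ultimately show ?thesis by metis
qed

lemma two_ab: "2 * a * b \<le> a * a + b * (b::nat)"
proof -
  have "0 \<le> (int a - int b)^2" by simp
  hence "2 * int a * int b \<le> int a * int a + int b * int b" by (simp add: power2_eq_square algebra_simps)
  hence "int (2 * a * b) \<le> int (a * a + b * b)" by simp
  thus ?thesis by linarith
qed

lemma sum_fiber:
  assumes "finite W"
  shows "(\<Sum>w\<in>W. h (\<kappa> w)) = (\<Sum>k\<in>\<kappa> ` W. card {w\<in>W. \<kappa> w = k} * (h k :: nat))"
proof -
  have "(\<Sum>w\<in>W. h (\<kappa> w)) = (\<Sum>k\<in>\<kappa> ` W. \<Sum>w\<in>{w\<in>W. \<kappa> w = k}. h (\<kappa> w))"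
    using assms by (rule sum.image_gen)
  also have "\<dots> = (\<Sum>k\<in>\<kappa> ` W. \<Sum>w\<in>{w\<in>W. \<kappa> w = k}. h k)"
    by (intro sum.cong refl) auto
  finally show ?thesis by simp
qed

lemma card_pairs_rel:
  assumes "finite W"
  shows "card {(w, w'). w \<in> W \<and> w' \<in> W \<and> \<kappa> w' = f (\<kappa> w)} = (\<Sum>w\<in>W. card {w'\<in>W. \<kappa> w' = f (\<kappa> w)})"
proof -
  have "{(w, w'). w \<in> W \<and> w' \<in> W \<and> \<kappa> w' = f (\<kappa> w)} = Sigma W (\<lambda>w. {w'\<in>W. \<kappa> w' = f (\<kappa> w)})"
    by auto
  thus ?thesis using assms by (simp add: card_SigmaI)
qed

lemma swap_bound:
  assumes fin: "finite W" and inv: "\<And>k. sw (sw k) = k"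
  shows "card {(w, w'). w \<in> W \<and> w' \<in> W \<and> \<kappa> w' = sw (\<kappa> w)}
       \<le> card {(w, w'). w \<in> W \<and> w' \<in> W \<and> \<kappa> w' = id (\<kappa> w)}"
proof -
  define g where "g k = card {w\<in>W. \<kappa> w = k}" for k
  define K where "K = \<kappa> ` W \<union> sw ` \<kappa> ` W"
  have finK: "finite K" unfolding K_def using fin by auto
  have g0: "g k = 0" if "k \<notin> \<kappa> ` W" for k
    using that unfolding g_def by (auto simp: card_eq_0_iff)
  have L: "card {(w, w'). w \<in> W \<and> w' \<in> W \<and> \<kappa> w' = sw (\<kappa> w)} = (\<Sum>k\<in>\<kappa> ` W. g k * g (sw k))"
    unfolding card_pairs_rel[OF fin] using sum_fiber[OF fin, of "\<lambda>k. g (sw k)" \<kappa>]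
    by (simp add: g_def)
  have R: "card {(w, w'). w \<in> W \<and> w' \<in> W \<and> \<kappa> w' = id (\<kappa> w)} = (\<Sum>k\<in>\<kappa> ` W. g k * g k)"
    unfolding card_pairs_rel[OF fin] using sum_fiber[OF fin, of "\<lambda>k. g k" \<kappa>]
    by (simp add: g_def)
  have L2: "(\<Sum>k\<in>\<kappa> ` W. g k * g (sw k)) = (\<Sum>k\<in>K. g k * g (sw k))"
    by (rule sum.mono_neutral_left) (use finK g0 in \<open>auto simp: K_def\<close>)
  have R2: "(\<Sum>k\<in>\<kappa> ` W. g k * g k) = (\<Sum>k\<in>K. g k * g k)"
    by (rule sum.mono_neutral_left) (use finK g0 in \<open>auto simp: K_def\<close>)
  have ss: "sw ` sw ` A = A" for A using inv by (simp add: image_comp comp_def)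
  have swK: "sw ` K = K" unfolding K_def image_Un ss by (rule Un_commute)
  have injK: "inj_on sw K" by (metis inv inj_on_inverseI)
  have re: "(\<Sum>k\<in>K. g (sw k) * g (sw k)) = (\<Sum>k\<in>K. g k * g k)"
    using sum.reindex[OF injK, of "\<lambda>k. g k * g k"] swK by simp
  have "2 * (\<Sum>k\<in>K. g k * g (sw k)) = (\<Sum>k\<in>K. 2 * g k * g (sw k))"
    by (simp add: sum_distrib_left mult.assoc)
  also have "\<dots> \<le> (\<Sum>k\<in>K. g k * g k + g (sw k) * g (sw k))"
    by (intro sum_mono two_ab)
  also have "\<dots> = 2 * (\<Sum>k\<in>K. g k * g k)"
    using re by (simp add: sum.distrib)
  finally show ?thesis using L R L2 R2 by simp
qed

definition pat :: "nat \<Rightarrow> (nat \<Rightarrow> nat) \<Rightarrow> nat list \<Rightarrow> nat list \<Rightarrow> nat list \<Rightarrow> nat list \<Rightarrow> bool" where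
  "pat c \<pi> x y x' y' = (\<forall>i<c. (\<pi> i = 0 \<longrightarrow> x ! i = y ! i \<and> x' ! i = y' ! i) \<and>
      (\<pi> i = 1 \<longrightarrow> x ! i = x' ! i \<and> y ! i = y' ! i) \<and>
      (\<pi> i \<noteq> 0 \<and> \<pi> i \<noteq> 1 \<longrightarrow> x ! i = y' ! i \<and> y ! i = x' ! i))"

definition prj :: "nat \<Rightarrow> (nat \<Rightarrow> bool) \<Rightarrow> nat list \<Rightarrow> nat \<Rightarrow> nat" where
  "prj c P x = (\<lambda>i. if P i \<and> i < c then x ! i else 0)"

lemma prj_eq: "prj c P x = prj c P y \<longleftrightarrow> (\<forall>i<c. P i \<longrightarrow> x ! i = y ! i)"
proof
  assume "prj c P x = prj c P y"
  hence "\<And>i. prj c P x i = prj c P y i" by simp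
  thus "\<forall>i<c. P i \<longrightarrow> x ! i = y ! i" unfolding prj_def by (metis (full_types))
next
  assume "\<forall>i<c. P i \<longrightarrow> x ! i = y ! i"
  thus "prj c P x = prj c P y" unfolding prj_def by (auto simp: fun_eq_iff)
qed

lemma keys_eq: "x \<in> keys c s \<Longrightarrow> y \<in> keys c s \<Longrightarrow> (\<And>i. i < c \<Longrightarrow> x ! i = y ! i) \<Longrightarrow> x = y"
  unfolding keys_def by (auto intro: nth_equalityI)

lemma Q_bound:
  assumes fin: "finite X" and XK: "X \<subseteq> keys c s"
  shows "card {((x,y),(u,v)). x \<in> X \<and> y \<in> X \<and> u \<in> X \<and> v \<in> X \<and>
            (\<forall>i<c. \<pi> i = 0 \<longrightarrow> x ! i = y ! i \<and> u ! i = v ! i) \<and>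
            (\<forall>i<c. \<pi> i \<noteq> 0 \<longrightarrow> x ! i = u ! i \<and> y ! i = v ! i)} \<le> card X ^ 2"
    (is "card ?Q \<le> _")
proof -
  let ?\<phi> = "\<lambda>((x::nat list,y::nat list),(u::nat list,v::nat list)). (x,v)"
  have "inj_on ?\<phi> ?Q"
  proof (rule inj_onI)
    fix a b assume hab: "a \<in> ?Q" "b \<in> ?Q" "?\<phi> a = ?\<phi> b"
    obtain x y u v where a: "a = ((x,y),(u,v))" by (metis prod.collapse)
    obtain x1 y1 u1 v1 where b: "b = ((x1,y1),(u1,v1))" by (metis prod.collapse)
    have h: "((x,y),(u,v)) \<in> ?Q" "((x1,y1),(u1,v1)) \<in> ?Q" using hab a b by auto
    have e: "x1 = x" "v1 = v" using hab(3) a b by auto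
    have A: "x \<in> X" "y \<in> X" "u \<in> X" "v \<in> X" "\<forall>i<c. \<pi> i = 0 \<longrightarrow> x ! i = y ! i \<and> u ! i = v ! i"
       "\<forall>i<c. \<pi> i \<noteq> 0 \<longrightarrow> x ! i = u ! i \<and> y ! i = v ! i" using h(1) by auto
    have B: "x1 \<in> X" "y1 \<in> X" "u1 \<in> X" "v1 \<in> X" "\<forall>i<c. \<pi> i = 0 \<longrightarrow> x1 ! i = y1 ! i \<and> u1 ! i = v1 ! i"
       "\<forall>i<c. \<pi> i \<noteq> 0 \<longrightarrow> x1 ! i = u1 ! i \<and> y1 ! i = v1 ! i" using h(2) by auto
    have "y = y1"
    proof (rule keys_eq[of _ c s])
      show "y \<in> keys c s" "y1 \<in> keys c s" using A B XK by auto
      fix i assume "i < c" thus "y ! i = y1 ! i" using A(5,6) B(5,6) e by (cases "\<pi> i = 0") auto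
    qed
    moreover have "u = u1"
    proof (rule keys_eq[of _ c s])
      show "u \<in> keys c s" "u1 \<in> keys c s" using A B XK by auto
      fix i assume "i < c" thus "u ! i = u1 ! i" using A(5,6) B(5,6) e by (cases "\<pi> i = 0") auto
    qed
    ultimately show "a = b" using e a b by simp
  qed
  moreover have "?\<phi> ` ?Q \<subseteq> X \<times> X" by auto
  ultimately have "card ?Q \<le> card (X \<times> X)"
    using fin by (metis (no_types, lifting) card_inj_on_le finite_SigmaI)
  thus ?thesis by (simp add: card_cartesian_product power2_eq_square)
qed

lemma R_bound:
  assumes fin: "finite X" and XK: "X \<subseteq> keys c s"
  shows "card {((x,y),(x',y')). x \<in> X \<and> y \<in> X \<and> x' \<in> X \<and> y' \<in> X \<and> pat c \<pi> x y x' y'} \<le> card X ^ 2"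
proof -
  define W where "W = {(x,y). x \<in> X \<and> y \<in> X \<and> (\<forall>i<c. \<pi> i = 0 \<longrightarrow> x ! i = y ! i)}"
  define P1 where "P1 = (\<lambda>i. \<pi> i = 1)"
  define P2 where "P2 = (\<lambda>i. \<pi> i \<noteq> 0 \<and> \<pi> i \<noteq> 1)"
  define \<kappa> where "\<kappa> = (\<lambda>(x,y). (prj c P1 x, prj c P2 x, prj c P1 y, prj c P2 y))"
  define sw :: "(nat \<Rightarrow> nat) \<times> (nat \<Rightarrow> nat) \<times> (nat \<Rightarrow> nat) \<times> (nat \<Rightarrow> nat) \<Rightarrow> _"
    where "sw = (\<lambda>(b,g,b',g'). (b,g',b',g))"
  have finW: "finite W" unfolding W_def
    by (rule finite_subset[of _ "X \<times> X"]) (use fin in auto)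
  have inv: "sw (sw k) = k" for k unfolding sw_def by (cases k) auto
  have s1: "{((x,y),(x',y')). x \<in> X \<and> y \<in> X \<and> x' \<in> X \<and> y' \<in> X \<and> pat c \<pi> x y x' y'}
      \<subseteq> {(w, w'). w \<in> W \<and> w' \<in> W \<and> \<kappa> w' = sw (\<kappa> w)}"
  proof (rule subsetI)
    fix w assume "w \<in> {((x,y),(x',y')). x \<in> X \<and> y \<in> X \<and> x' \<in> X \<and> y' \<in> X \<and> pat c \<pi> x y x' y'}"
    then obtain x y x' y' where w: "w = ((x,y),(x',y'))" and h: "x \<in> X" "y \<in> X" "x' \<in> X" "y' \<in> X"
      and p: "pat c \<pi> x y x' y'" by blast
    have p': "\<And>i. i < c \<Longrightarrow> (\<pi> i = 0 \<longrightarrow> x ! i = y ! i \<and> x' ! i = y' ! i) \<and>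
      (\<pi> i = 1 \<longrightarrow> x ! i = x' ! i \<and> y ! i = y' ! i) \<and>
      (\<pi> i \<noteq> 0 \<and> \<pi> i \<noteq> 1 \<longrightarrow> x ! i = y' ! i \<and> y ! i = x' ! i)" using p unfolding pat_def by blast
    have "prj c P1 x' = prj c P1 x" unfolding prj_eq P1_def using p' by simp
    moreover have "prj c P2 x' = prj c P2 y" unfolding prj_eq P2_def using p' by simp
    moreover have "prj c P1 y' = prj c P1 y" unfolding prj_eq P1_def using p' by simp
    moreover have "prj c P2 y' = prj c P2 x" unfolding prj_eq P2_def using p' by simp
    moreover have "(x,y) \<in> W" "(x',y') \<in> W" unfolding W_def using h p' by auto
    ultimately show "w \<in> {(w, w'). w \<in> W \<and> w' \<in> W \<and> \<kappa> w' = sw (\<kappa> w)}"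
      unfolding w \<kappa>_def sw_def by simp
  qed
  have s2: "{(w, w'). w \<in> W \<and> w' \<in> W \<and> \<kappa> w' = id (\<kappa> w)} \<subseteq>
     {((x,y),(u,v)). x \<in> X \<and> y \<in> X \<and> u \<in> X \<and> v \<in> X \<and>
            (\<forall>i<c. \<pi> i = 0 \<longrightarrow> x ! i = y ! i \<and> u ! i = v ! i) \<and>
            (\<forall>i<c. \<pi> i \<noteq> 0 \<longrightarrow> x ! i = u ! i \<and> y ! i = v ! i)}"
  proof (rule subsetI)
    fix w assume "w \<in> {(w, w'). w \<in> W \<and> w' \<in> W \<and> \<kappa> w' = id (\<kappa> w)}"
    then obtain x y u v where w: "w = ((x,y),(u,v))" and h: "(x,y) \<in> W" "(u,v) \<in> W"
      and k: "\<kappa> (u,v) = \<kappa> (x,y)" by auto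
    have k1: "prj c P1 u = prj c P1 x" "prj c P2 u = prj c P2 x" "prj c P1 v = prj c P1 y" "prj c P2 v = prj c P2 y"
      using k unfolding \<kappa>_def by simp_all
    have a: "\<forall>i<c. \<pi> i \<noteq> 0 \<longrightarrow> x ! i = u ! i \<and> y ! i = v ! i"
      using k1 unfolding prj_eq P1_def P2_def by metis
    show "w \<in> {((x,y),(u,v)). x \<in> X \<and> y \<in> X \<and> u \<in> X \<and> v \<in> X \<and>
            (\<forall>i<c. \<pi> i = 0 \<longrightarrow> x ! i = y ! i \<and> u ! i = v ! i) \<and>
            (\<forall>i<c. \<pi> i \<noteq> 0 \<longrightarrow> x ! i = u ! i \<and> y ! i = v ! i)}"
      unfolding w using h a unfolding W_def by auto
  qed
  have finQ: "finite {((x,y),(u,v)). x \<in> X \<and> y \<in> X \<and> u \<in> X \<and> v \<in> X \<and>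
            (\<forall>i<c. \<pi> i = 0 \<longrightarrow> x ! i = y ! i \<and> u ! i = v ! i) \<and>
            (\<forall>i<c. \<pi> i \<noteq> 0 \<longrightarrow> x ! i = u ! i \<and> y ! i = v ! i)}"
    by (rule finite_subset[of _ "(X \<times> X) \<times> (X \<times> X)"]) (use fin in auto)
  have finS: "finite {(w, w'). w \<in> W \<and> w' \<in> W \<and> \<kappa> w' = sw (\<kappa> w)}"
    by (rule finite_subset[of _ "W \<times> W"]) (use finW in auto)
  have "card {((x,y),(x',y')). x \<in> X \<and> y \<in> X \<and> x' \<in> X \<and> y' \<in> X \<and> pat c \<pi> x y x' y'}
     \<le> card {(w, w'). w \<in> W \<and> w' \<in> W \<and> \<kappa> w' = sw (\<kappa> w)}"
    by (rule card_mono[OF finS s1])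
  also have "\<dots> \<le> card {(w, w'). w \<in> W \<and> w' \<in> W \<and> \<kappa> w' = id (\<kappa> w)}"
    by (rule swap_bound[OF finW inv])
  also have "\<dots> \<le> card {((x,y),(u,v)). x \<in> X \<and> y \<in> X \<and> u \<in> X \<and> v \<in> X \<and>
            (\<forall>i<c. \<pi> i = 0 \<longrightarrow> x ! i = y ! i \<and> u ! i = v ! i) \<and>
            (\<forall>i<c. \<pi> i \<noteq> 0 \<longrightarrow> x ! i = u ! i \<and> y ! i = v ! i)}"
    by (rule card_mono[OF finQ s2])
  also have "\<dots> \<le> card X ^ 2" by (rule Q_bound[OF fin XK])
  finally show ?thesis .
qed

lemma dep_pos:
  assumes h: "\<And>a. ((x0 = a) \<noteq> (y0 = a)) = ((x1 = a) \<noteq> (y1 = (a::nat)))"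
  shows "(x0 = y0 \<longrightarrow> x1 = y1) \<and> (x0 \<noteq> y0 \<and> x0 = x1 \<longrightarrow> y0 = y1) \<and>
         (x0 \<noteq> y0 \<and> x0 \<noteq> x1 \<longrightarrow> x0 = y1 \<and> y0 = x1)"
proof (intro conjI impI)
  assume "x0 = y0" thus "x1 = y1" using h[of x1] by simp
next
  assume a: "x0 \<noteq> y0 \<and> x0 = x1"
  thus "y0 = y1" using h[of y0] by auto
next
  assume a: "x0 \<noteq> y0 \<and> x0 \<noteq> x1"
  show "x0 = y1" using a h[of x0] by auto
  thus "y0 = x1" using a h[of y0] by auto
qed

lemma dep_pat:
  assumes "dep c x y x' y'"
  shows "pat c (restrict (\<lambda>i. if x ! i = y ! i then 0 else if x ! i = x' ! i then 1 else 2) {..<c}) x y x' y'"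
  unfolding pat_def
proof (intro allI impI)
  fix i assume i: "i < c"
  have h: "\<And>a. ((x ! i = a) \<noteq> (y ! i = a)) = ((x' ! i = a) \<noteq> (y' ! i = a))"
    using assms i unfolding dep_def by blast
  note d = dep_pos[OF h]
  show "(restrict (\<lambda>i. if x ! i = y ! i then (0::nat) else if x ! i = x' ! i then 1 else 2) {..<c} i = 0 \<longrightarrow> x ! i = y ! i \<and> x' ! i = y' ! i) \<and>
       (restrict (\<lambda>i. if x ! i = y ! i then (0::nat) else if x ! i = x' ! i then 1 else 2) {..<c} i = 1 \<longrightarrow> x ! i = x' ! i \<and> y ! i = y' ! i) \<and>
       (restrict (\<lambda>i. if x ! i = y ! i then (0::nat) else if x ! i = x' ! i then 1 else 2) {..<c} i \<noteq> 0 \<and>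
        restrict (\<lambda>i. if x ! i = y ! i then (0::nat) else if x ! i = x' ! i then 1 else 2) {..<c} i \<noteq> 1 \<longrightarrow>
        x ! i = y' ! i \<and> y ! i = x' ! i)"
  proof (cases "x ! i = y ! i")
    case True thus ?thesis using i d by simp
  next
    case False
    thus ?thesis using i d by (cases "x ! i = x' ! i") simp_all
  qed
qed

lemma dep_count:
  assumes fin: "finite X" and XK: "X \<subseteq> keys c s"
  shows "card {((x,y),(x',y')). x \<in> X \<and> y \<in> X \<and> x' \<in> X \<and> y' \<in> X \<and> dep c x y x' y'} \<le> 3 ^ c * card X ^ 2"
proof -
  let ?P = "PiE {..<c} (\<lambda>_. {..<3::nat})"
  let ?R = "\<lambda>\<pi>. {((x,y),(x',y')). x \<in> X \<and> y \<in> X \<and> x' \<in> X \<and> y' \<in> X \<and> pat c \<pi> x y x' y'}"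
  have sub: "{((x,y),(x',y')). x \<in> X \<and> y \<in> X \<and> x' \<in> X \<and> y' \<in> X \<and> dep c x y x' y'} \<subseteq> (\<Union>\<pi>\<in>?P. ?R \<pi>)"
  proof (clarify)
    fix x y x' y' assume h: "x \<in> X" "y \<in> X" "x' \<in> X" "y' \<in> X" "dep c x y x' y'"
    let ?\<pi> = "restrict (\<lambda>i. if x ! i = y ! i then 0 else if x ! i = x' ! i then 1 else (2::nat)) {..<c}"
    have "?\<pi> \<in> ?P" by auto
    moreover have "((x,y),(x',y')) \<in> ?R ?\<pi>" using h dep_pat[OF h(5)] by auto
    ultimately show "((x,y),(x',y')) \<in> (\<Union>\<pi>\<in>?P. ?R \<pi>)" by blast
  qed
  have finP: "finite ?P" by (auto intro: finite_PiE)
  have finR: "finite (?R \<pi>)" for \<pi>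
    by (rule finite_subset[of _ "(X \<times> X) \<times> (X \<times> X)"]) (use fin in auto)
  have "card {((x,y),(x',y')). x \<in> X \<and> y \<in> X \<and> x' \<in> X \<and> y' \<in> X \<and> dep c x y x' y'}
      \<le> card (\<Union>\<pi>\<in>?P. ?R \<pi>)"
    by (rule card_mono[OF _ sub]) (use finP finR in auto)
  also have "\<dots> \<le> (\<Sum>\<pi>\<in>?P. card (?R \<pi>))" by (rule card_UN_le[OF finP])
  also have "\<dots> \<le> (\<Sum>\<pi>\<in>?P. card X ^ 2)" by (intro sum_mono R_bound[OF fin XK])
  also have "\<dots> = 3 ^ c * card X ^ 2" by (simp add: card_PiE)
  finally show ?thesis .
qed

lemma keys_finite: "finite (keys c s)"
proof -
  have "keys c s = {xs. set xs \<subseteq> {..<s} \<and> length xs = c}" unfolding keys_def by auto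
  thus ?thesis by (simp add: finite_lists_length_eq)
qed

lemma unord_card:
  assumes fin: "finite A" and sym: "\<And>x y. R x y \<Longrightarrow> R y x"
  shows "2 * card {{x, y} | x y. x \<in> A \<and> y \<in> A \<and> x \<noteq> y \<and> R x y} =
         card {(x, y). x \<in> A \<and> y \<in> A \<and> x \<noteq> y \<and> R x y}"
proof -
  let ?O = "{(x, y). x \<in> A \<and> y \<in> A \<and> x \<noteq> y \<and> R x y}"
  let ?f = "\<lambda>(x, y). {x, y}"
  have finO: "finite ?O" by (rule finite_subset[of _ "A \<times> A"]) (use fin in auto)
  have U: "{{x, y} | x y. x \<in> A \<and> y \<in> A \<and> x \<noteq> y \<and> R x y} = ?f ` ?O" by auto
  have "card ?O = (\<Sum>w\<in>?O. 1)" by simp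
  also have "\<dots> = (\<Sum>e\<in>?f ` ?O. \<Sum>w\<in>{w\<in>?O. ?f w = e}. 1)" using finO by (rule sum.image_gen)
  also have "\<dots> = (\<Sum>e\<in>?f ` ?O. 2)"
  proof (rule sum.cong[OF refl])
    fix e assume "e \<in> ?f ` ?O"
    then obtain a b where ab: "a \<in> A" "b \<in> A" "a \<noteq> b" "R a b" and e: "e = {a, b}" by auto
    have "{w\<in>?O. ?f w = e} = {(a, b), (b, a)}"
      using ab sym unfolding e by (auto simp: doubleton_eq_iff)
    thus "(\<Sum>w\<in>{w\<in>?O. ?f w = e}. 1) = (2::nat)" using ab by simp
  qed
  also have "\<dots> = 2 * card (?f ` ?O)" by simp
  finally show ?thesis using U by simp
qed

lemma coll_pairs2:
  assumes "finite A"
  shows "2 * coll_pairs c T A = card {(x, y). x \<in> A \<and> y \<in> A \<and> x \<noteq> y \<and> tab_hash c T x = tab_hash c T y}"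
  unfolding coll_pairs_def by (rule unord_card[OF assms]) simp

lemma total_coll_eq:
  assumes fin: "\<And>i. i < k \<Longrightarrow> finite (G i)"
    and disj: "\<And>i j. i < k \<Longrightarrow> j < k \<Longrightarrow> i \<noteq> j \<Longrightarrow> G i \<inter> G j = {}"
  shows "2 * total_coll c T k G =
     card {w \<in> {(x, y). \<exists>i<k. x \<in> G i \<and> y \<in> G i \<and> x \<noteq> y}. tab_hash c T (fst w) = tab_hash c T (snd w)}"
proof -
  let ?O = "\<lambda>i. {(x, y). x \<in> G i \<and> y \<in> G i \<and> x \<noteq> y \<and> tab_hash c T x = tab_hash c T y}"
  have "2 * total_coll c T k G = (\<Sum>i<k. 2 * coll_pairs c T (G i))"
    unfolding total_coll_def by (simp add: sum_distrib_left)
  also have "\<dots> = (\<Sum>i<k. card (?O i))" using coll_pairs2 fin by simp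
  also have "\<dots> = card (\<Union>i<k. ?O i)"
  proof (rule card_UN_disjoint[symmetric])
    show "finite {..<k}" by simp
    show "\<forall>i\<in>{..<k}. finite (?O i)"
    proof
      fix i assume "i \<in> {..<k}"
      hence "finite (G i \<times> G i)" using fin by simp
      thus "finite (?O i)" by (rule finite_subset[rotated]) auto
    qed
    show "\<forall>i\<in>{..<k}. \<forall>j\<in>{..<k}. i \<noteq> j \<longrightarrow> ?O i \<inter> ?O j = {}"
      using disj by blast
  qed
  also have "(\<Union>i<k. ?O i) = {w \<in> {(x, y). \<exists>i<k. x \<in> G i \<and> y \<in> G i \<and> x \<noteq> y}. tab_hash c T (fst w) = tab_hash c T (snd w)}"
    by auto
  finally show ?thesis .
qed

lemma sum_ind: "finite S \<Longrightarrow> (\<Sum>T\<in>S. if Q T then 1 else (0::real)) = real (card {T\<in>S. Q T})"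
  by (simp add: sum.inter_filter[symmetric])

lemma exp_formula:
  assumes "finite S" "S \<noteq> {}"
  shows "measure_pmf.expectation (pmf_of_set S) (\<lambda>T. (\<Sum>w\<in>P. I w T) / 2) =
         (\<Sum>w\<in>P. \<Sum>T\<in>S. I w T) / (2 * real (card S))"
  using assms by (simp add: integral_pmf_of_set sum_divide_distrib[symmetric] sum.swap[of _ P] )

theorem lemma5:
  fixes c s r k m0 :: nat and X :: "nat list set" and G :: "nat \<Rightarrow> nat list set"
    and q :: "nat list" and z :: nat
  assumes c_pos: "c \<ge> 1"
    and X_sub: "X \<subseteq> keys c s"
    and G_union: "(\<Union>i<k. G i) = X"
    and G_disj: "\<And>i j. i < k \<Longrightarrow> j < k \<Longrightarrow> i \<noteq> j \<Longrightarrow> G i \<inter> G j = {}"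
    and m0_pos: "m0 \<ge> 1"
    and G_size: "\<And>i. i < k \<Longrightarrow> card (G i) \<le> m0"
    and q_key: "q \<in> keys c s - X"
    and z_bin: "z < 2 ^ r"
  shows "(measure_pmf.expectation (tab_space c s r) (\<lambda>T. real (total_coll c T k G))
           \<le> real (card X) * real m0 / (2 * 2 ^ r)) \<and>
         (measure_pmf.variance (tab_space c s r) (\<lambda>T. real (total_coll c T k G))
           \<le> (3 ^ c + 1) * real (card X) ^ 2 / 2 ^ r + real (card X) * real m0 ^ 2 / (2 ^ r) ^ 2) \<and>
         (measure_pmf.expectation
           (pmf_of_set {T \<in> tables c s r. tab_hash c T q = z}) (\<lambda>T. real (total_coll c T k G))
           \<le> real (card X) * real m0 / (2 * 2 ^ r))"
proof -
  define N where "N = card (tables c s r)"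
  define P where "P = {(x, y). \<exists>i<k. x \<in> G i \<and> y \<in> G i \<and> x \<noteq> y}"
  define I where "I = (\<lambda>w T. if tab_hash c T (fst w) = tab_hash c T (snd w) then 1 else (0::real))"
  define m where "m = card X"
  have finX: "finite X" by (rule finite_subset[OF X_sub keys_finite])
  have finG: "finite (G i)" if "i < k" for i
  proof -
    have "G i \<subseteq> X" using that G_union by auto
    thus ?thesis using finX by (rule finite_subset)
  qed
  have PX: "P \<subseteq> X \<times> X" unfolding P_def using G_union by auto
  have finP: "finite P" by (rule finite_subset[OF PX]) (use finX in simp)
  have Pk: "fst w \<in> keys c s" "snd w \<in> keys c s" "fst w \<noteq> snd w" if "w \<in> P" for w
  proof -
    have "w \<in> X \<times> X" using that PX by blast
    hence "fst w \<in> X" "snd w \<in> X" by auto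
    thus "fst w \<in> keys c s" "snd w \<in> keys c s" using X_sub by auto
    show "fst w \<noteq> snd w" using that unfolding P_def by auto
  qed
  have finT: "finite (tables c s r)" by (rule tables_finite)
  have neT: "tables c s r \<noteq> {}" by (rule tables_ne)
  have Npos: "real N > 0" unfolding N_def using tables_card_pos by simp
  have pos: "(2::real) ^ r > 0" by simp
  have C: "real (total_coll c T k G) = (\<Sum>w\<in>P. I w T) / 2" for T
  proof -
    have "2 * total_coll c T k G = card {w\<in>P. tab_hash c T (fst w) = tab_hash c T (snd w)}"
      unfolding P_def by (rule total_coll_eq[OF finG G_disj])
    hence "real (2 * total_coll c T k G) = real (card {w\<in>P. tab_hash c T (fst w) = tab_hash c T (snd w)})"
      by (simp only:)
    also have "\<dots> = (\<Sum>w\<in>P. I w T)" unfolding I_def by (rule sum_ind[OF finP, symmetric])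
    finally show ?thesis by simp
  qed
  have Cf: "(\<lambda>T. real (total_coll c T k G)) = (\<lambda>T. (\<Sum>w\<in>P. I w T) / 2)" using C by (rule ext)
  have cardP: "real (card P) \<le> real m * real m0"
  proof -
    have "P \<subseteq> (\<Union>i<k. G i \<times> G i)" unfolding P_def by auto
    hence "card P \<le> card (\<Union>i<k. G i \<times> G i)" by (rule card_mono[rotated]) (use finG in auto)
    also have "\<dots> \<le> (\<Sum>i<k. card (G i \<times> G i))" by (rule card_UN_le) simp
    also have "\<dots> \<le> (\<Sum>i<k. card (G i) * m0)"
      by (rule sum_mono) (use G_size in \<open>simp add: card_cartesian_product\<close>)
    also have "\<dots> = (\<Sum>i<k. card (G i)) * m0" by (simp add: sum_distrib_right)
    also have "(\<Sum>i<k. card (G i)) = card X"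
      unfolding G_union[symmetric] by (rule card_UN_disjoint[symmetric]) (use finG G_disj in auto)
    finally have "card P \<le> m * m0" unfolding m_def .
    thus ?thesis by (metis of_nat_le_iff of_nat_mult)
  qed
  have cA: "real (card {T\<in>tables c s r. tab_hash c T (fst w) = tab_hash c T (snd w)}) = real N / 2 ^ r"
    if "w \<in> P" for w
  proof -
    have "card {T\<in>tables c s r. tab_hash c T (fst w) = tab_hash c T (snd w)} * 2 ^ r = N"
      unfolding N_def using card_A Pk[OF that] by blast
    hence "real (card {T\<in>tables c s r. tab_hash c T (fst w) = tab_hash c T (snd w)} * 2 ^ r) = real N"
      by (simp only:)
    hence "real (card {T\<in>tables c s r. tab_hash c T (fst w) = tab_hash c T (snd w)}) * 2 ^ r = real N"
      by simp
    thus ?thesis using pos by (simp add: field_simps)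
  qed
  have sumI: "(\<Sum>T\<in>S. I w T) = real (card {T\<in>S. tab_hash c T (fst w) = tab_hash c T (snd w)})"
    if "finite S" for S w unfolding I_def by (rule sum_ind[OF that])
  have E: "measure_pmf.expectation (tab_space c s r) (\<lambda>T. real (total_coll c T k G)) = real (card P) / (2 * 2 ^ r)"
  proof -
    have "measure_pmf.expectation (tab_space c s r) (\<lambda>T. real (total_coll c T k G))
        = (\<Sum>w\<in>P. \<Sum>T\<in>tables c s r. I w T) / (2 * real N)"
      unfolding tab_space_def Cf N_def by (rule exp_formula[OF finT neT])
    also have "\<dots> = (\<Sum>w\<in>P. real N / 2 ^ r) / (2 * real N)"
      using sumI[OF finT] cA by simp
    also have "\<dots> = real (card P) / (2 * 2 ^ r)" using Npos by simp
    finally show ?thesis .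
  qed
  have part1: "measure_pmf.expectation (tab_space c s r) (\<lambda>T. real (total_coll c T k G))
           \<le> real (card X) * real m0 / (2 * 2 ^ r)"
    unfolding E m_def[symmetric] by (rule divide_right_mono[OF cardP]) simp
  have part3: "measure_pmf.expectation
           (pmf_of_set {T \<in> tables c s r. tab_hash c T q = z}) (\<lambda>T. real (total_coll c T k G))
           \<le> real (card X) * real m0 / (2 * 2 ^ r)"
  proof -
    let ?S = "{T \<in> tables c s r. tab_hash c T q = z}"
    have qk: "q \<in> keys c s" using q_key by simp
    have cS: "card ?S * 2 ^ r = N" unfolding N_def using card_single[OF qk c_pos z_bin] .
    hence "real (card ?S * 2 ^ r) = real N" by (simp only:)
    hence cS': "real (card ?S) = real N / 2 ^ r"
      using pos by (simp add: field_simps)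
    have finS: "finite ?S" using finT by simp
    have neS: "?S \<noteq> {}"
    proof
      assume "?S = {}"
      hence "card ?S = 0" by (simp only: card.empty)
      hence "N = 0" using cS by simp
      thus False using Npos by simp
    qed
    have cSw: "real (card {T\<in>?S. tab_hash c T (fst w) = tab_hash c T (snd w)}) = real N / 2 ^ r / 2 ^ r"
      if "w \<in> P" for w
    proof -
      have "{T\<in>?S. tab_hash c T (fst w) = tab_hash c T (snd w)} =
            {T\<in>tables c s r. tab_hash c T q = z \<and> tab_hash c T (fst w) = tab_hash c T (snd w)}" by auto
      moreover have "card {T\<in>tables c s r. tab_hash c T q = z \<and> tab_hash c T (fst w) = tab_hash c T (snd w)} * 2^r * 2^r = N"
        unfolding N_def using card_q[OF qk c_pos z_bin] Pk[OF that] by blast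
      ultimately have "real (card {T\<in>?S. tab_hash c T (fst w) = tab_hash c T (snd w)} * 2^r * 2^r) = real N"
        by simp
      hence "real (card {T\<in>?S. tab_hash c T (fst w) = tab_hash c T (snd w)}) * 2^r * 2^r = real N"
        by simp
      thus ?thesis using pos by (simp add: field_simps)
    qed
    have "measure_pmf.expectation (pmf_of_set ?S) (\<lambda>T. real (total_coll c T k G))
        = (\<Sum>w\<in>P. \<Sum>T\<in>?S. I w T) / (2 * real (card ?S))"
      unfolding Cf by (rule exp_formula[OF finS neS])
    also have "\<dots> = (\<Sum>w\<in>P. real N / 2 ^ r / 2 ^ r) / (2 * (real N / 2 ^ r))"
      using sumI[OF finS] cSw cS' by simp
    also have "\<dots> = real (card P) / (2 * 2 ^ r)" using Npos pos by (simp add: field_simps)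
    also have "\<dots> \<le> real m * real m0 / (2 * 2 ^ r)" by (rule divide_right_mono[OF cardP]) simp
    finally show ?thesis unfolding m_def .
  qed
  have part2: "measure_pmf.variance (tab_space c s r) (\<lambda>T. real (total_coll c T k G))
           \<le> (3 ^ c + 1) * real (card X) ^ 2 / 2 ^ r + real (card X) * real m0 ^ 2 / (2 ^ r) ^ 2"
  proof -
    let ?M = "tab_space c s r"
    let ?C = "\<lambda>T. real (total_coll c T k G)"
    let ?T = "tables c s r"
    have setM: "set_pmf ?M = ?T" unfolding tab_space_def using finT neT by simp
    have int: "integrable (measure_pmf ?M) f" for f :: "_ \<Rightarrow> real"
      by (rule integrable_measure_pmf_finite) (simp add: setM finT)
    have V: "measure_pmf.variance ?M ?C = measure_pmf.expectation ?M (\<lambda>T. (?C T)^2) - (measure_pmf.expectation ?M ?C)^2"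
      by (rule measure_pmf.variance_eq[OF int int])
    define D where "D = (\<lambda>w w'. dep c (fst w) (snd w) (fst w') (snd w'))"
    define a where "a = (\<lambda>w w'. card {T\<in>?T. tab_hash c T (fst w) = tab_hash c T (snd w) \<and>
                                          tab_hash c T (fst w') = tab_hash c T (snd w')})"
    have sq: "(?C T)^2 = (\<Sum>w\<in>P. \<Sum>w'\<in>P. I w T * I w' T) / 4" for T
    proof -
      have "(?C T)^2 = (\<Sum>w\<in>P. I w T) * (\<Sum>w\<in>P. I w T) / 4" unfolding C by (simp add: power2_eq_square)
      thus ?thesis by (simp add: sum_product)
    qed
    have II: "(\<Sum>T\<in>?T. I w T * I w' T) = real (a w w')" for w w'
    proof -
      have "(\<lambda>T. I w T * I w' T) = (\<lambda>T. if tab_hash c T (fst w) = tab_hash c T (snd w) \<and>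
                                          tab_hash c T (fst w') = tab_hash c T (snd w') then 1 else (0::real))"
        by (auto simp: I_def fun_eq_iff)
      hence "(\<Sum>T\<in>?T. I w T * I w' T) = (\<Sum>T\<in>?T. if tab_hash c T (fst w) = tab_hash c T (snd w) \<and>
                                          tab_hash c T (fst w') = tab_hash c T (snd w') then 1 else (0::real))"
        by (simp only:)
      also have "\<dots> = real (a w w')" unfolding a_def by (rule sum_ind[OF finT])
      finally show ?thesis .
    qed
    have swp: "(\<Sum>T\<in>?T. \<Sum>w\<in>P. \<Sum>w'\<in>P. f T w w') = (\<Sum>w\<in>P. \<Sum>w'\<in>P. \<Sum>T\<in>?T. f T w w')"
      for f :: "_ \<Rightarrow> _ \<Rightarrow> _ \<Rightarrow> real"
    proof -
      have "(\<Sum>T\<in>?T. \<Sum>w\<in>P. \<Sum>w'\<in>P. f T w w') = (\<Sum>w\<in>P. \<Sum>T\<in>?T. \<Sum>w'\<in>P. f T w w')"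
        by (rule sum.swap)
      also have "\<dots> = (\<Sum>w\<in>P. \<Sum>w'\<in>P. \<Sum>T\<in>?T. f T w w')"
        by (rule sum.cong[OF refl]) (rule sum.swap)
      finally show ?thesis .
    qed
    have E2: "measure_pmf.expectation ?M (\<lambda>T. (?C T)^2) = (\<Sum>w\<in>P. \<Sum>w'\<in>P. real (a w w')) / (4 * real N)"
    proof -
      have "measure_pmf.expectation ?M (\<lambda>T. (?C T)^2) = (\<Sum>T\<in>?T. (?C T)^2) / real N"
        unfolding tab_space_def N_def using finT neT by (simp add: integral_pmf_of_set)
      also have "(\<Sum>T\<in>?T. (?C T)^2) = (\<Sum>T\<in>?T. \<Sum>w\<in>P. \<Sum>w'\<in>P. I w T * I w' T) / 4"
        unfolding sq by (simp add: sum_divide_distrib)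
      also have "\<dots> = (\<Sum>w\<in>P. \<Sum>w'\<in>P. real (a w w')) / 4"
        unfolding swp II by simp
      finally show ?thesis by simp
    qed
    have S1: "(\<Sum>w\<in>P. \<Sum>w'\<in>P. (real (a w w') / real N - 1 / (2^r)^2)) =
              (\<Sum>w\<in>P. \<Sum>w'\<in>P. real (a w w')) / real N - real (card P) ^ 2 / (2^r)^2"
      by (simp add: sum_subtractf sum_divide_distrib power2_eq_square)
    have V2: "measure_pmf.variance ?M ?C = (\<Sum>w\<in>P. \<Sum>w'\<in>P. (real (a w w') / real N - 1 / (2^r)^2)) / 4"
    proof -
      have V': "measure_pmf.variance ?M ?C = (\<Sum>w\<in>P. \<Sum>w'\<in>P. real (a w w')) / (4 * real N)
                  - (real (card P) / (2 * 2 ^ r))^2"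
        by (subst V) (simp only: E2 E)
      show ?thesis unfolding V' S1 using Npos pos by (simp add: field_simps power2_eq_square)
    qed
    have tb: "real (a w w') / real N - 1 / (2^r)^2 \<le> (if D w w' then 1 / 2^r else 0)"
      if w: "w \<in> P" and w': "w' \<in> P" for w w'
    proof (cases "D w w'")
      case True
      have "a w w' \<le> card {T\<in>?T. tab_hash c T (fst w) = tab_hash c T (snd w)}"
        unfolding a_def by (rule card_mono) (use finT in auto)
      hence "real (a w w') \<le> real N / 2 ^ r" using cA[OF w] by linarith
      hence "real (a w w') / real N \<le> 1 / 2 ^ r" using Npos by (simp add: field_simps)
      moreover have "0 \<le> 1 / ((2::real)^r)^2" by simp
      ultimately have "real (a w w') / real N - 1 / (2^r)^2 \<le> 1 / 2^r" by linarith
      thus ?thesis using True by simp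
    next
      case False
      have "a w w' * 2^r * 2^r = N"
        unfolding a_def N_def
        by (rule card_AB) (use Pk[OF w] Pk[OF w'] False in \<open>auto simp: D_def\<close>)
      hence "real (a w w' * 2^r * 2^r) = real N" by (simp only:)
      hence "real (a w w') * 2^r * 2^r = real N" by simp
      hence "real (a w w') / real N = 1 / (2^r)^2" using Npos pos by (simp add: field_simps power2_eq_square)
      thus ?thesis using False by simp
    qed
    have finPP: "finite (P \<times> P)" using finP by simp
    have S2: "(\<Sum>w\<in>P. \<Sum>w'\<in>P. (if D w w' then 1 / 2^r else (0::real))) =
              real (card {p\<in>P \<times> P. D (fst p) (snd p)}) / 2^r"
    proof -
      have "(\<Sum>w\<in>P. \<Sum>w'\<in>P. (if D w w' then 1 / 2^r else (0::real))) =
            (\<Sum>p\<in>P \<times> P. (if D (fst p) (snd p) then 1 / 2^r else (0::real)))"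
        by (simp add: sum.cartesian_product case_prod_beta)
      also have "\<dots> = (\<Sum>p\<in>{p\<in>P \<times> P. D (fst p) (snd p)}. 1 / 2^r)"
        by (rule sum.inter_filter[OF finPP, symmetric])
      also have "\<dots> = real (card {p\<in>P \<times> P. D (fst p) (snd p)}) / 2^r" by simp
      finally show ?thesis .
    qed
    have cD: "card {p\<in>P \<times> P. D (fst p) (snd p)} \<le> 3 ^ c * m ^ 2"
    proof -
      have sub: "{p\<in>P \<times> P. D (fst p) (snd p)} \<subseteq>
          {((x,y),(x',y')). x \<in> X \<and> y \<in> X \<and> x' \<in> X \<and> y' \<in> X \<and> dep c x y x' y'}"
        using PX unfolding D_def by auto
      have fin4: "finite {((x,y),(x',y')). x \<in> X \<and> y \<in> X \<and> x' \<in> X \<and> y' \<in> X \<and> dep c x y x' y'}"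
        by (rule finite_subset[of _ "(X \<times> X) \<times> (X \<times> X)"]) (use finX in auto)
      have "card {p\<in>P \<times> P. D (fst p) (snd p)} \<le>
          card {((x,y),(x',y')). x \<in> X \<and> y \<in> X \<and> x' \<in> X \<and> y' \<in> X \<and> dep c x y x' y'}"
        by (rule card_mono[OF fin4 sub])
      also have "\<dots> \<le> 3 ^ c * m ^ 2" unfolding m_def by (rule dep_count[OF finX X_sub])
      finally show ?thesis .
    qed
    have "measure_pmf.variance ?M ?C \<le> (\<Sum>w\<in>P. \<Sum>w'\<in>P. (if D w w' then 1 / 2^r else (0::real))) / 4"
      unfolding V2 by (intro divide_right_mono sum_mono tb) auto
    also have "\<dots> = real (card {p\<in>P \<times> P. D (fst p) (snd p)}) / 2^r / 4" unfolding S2 ..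
    also have "\<dots> \<le> real (3 ^ c * m ^ 2) / 2^r / 4"
      by (intro divide_right_mono of_nat_mono[OF cD]) auto
    also have "\<dots> \<le> (3 ^ c + 1) * real m ^ 2 / 2 ^ r"
      using pos by (simp add: field_simps)
    also have "\<dots> \<le> (3 ^ c + 1) * real m ^ 2 / 2 ^ r + real m * real m0 ^ 2 / (2 ^ r) ^ 2"
      by simp
    finally show ?thesis unfolding m_def .
  qed
  show ?thesis using part1 part2 part3 by blast
qed

end
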